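(* A matrix $H_0\in\mathbb{C}^{3\times 3}$ is Hermitian, positive semidefinite and satisfies $H_0 H_0^T = 0_{3\times3}$ if and only if either $H_0=0$ or there exist $a,b,c\in\mathbb{R}$, not all zero, such that, with $x=\sqrt{a^2+b^2+c^2}$, $$H_0=\frac{1}{x}\begin{pmatrix} a^2+b^2 & bc+iax & -ac+ibx\\ bc-iax & a^2+c^2 & ab+icx\\ -ac-ibx & ab-icx & b^2+c^2\end{pmatrix}.$$
   Context: $^T$ denotes transpose (no conjugation). *)

theory Defs
  imports "HOL-Analysis.Analysis"
begin

definition conj_transpose :: "complex^'n^'m \<Rightarrow> complex^'m^'n" where
  "conj_transpose A = (\<chi> i j. cnj (A $ j $ i))"

definition hermitian :: "complex^'n^'n \<Rightarrow> bool" where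
  "hermitian A \<longleftrightarrow> conj_transpose A = A"

definition psd :: "complex^'n^'n \<Rightarrow> bool" where
  "psd A \<longleftrightarrow> (\<forall>v::complex^'n.
     let q = (\<Sum>i\<in>UNIV. cnj (v $ i) * (A *v v) $ i) in Im q = 0 \<and> Re q \<ge> 0)"

definition Hmat :: "real \<Rightarrow> real \<Rightarrow> real \<Rightarrow> complex^3^3" where
  "Hmat a b c = (let x = sqrt (a^2 + b^2 + c^2);
     M = (vector [
       vector [complex_of_real (a^2+b^2), Complex (b*c) (a*x), Complex (-a*c) (b*x)],
       vector [Complex (b*c) (-a*x), complex_of_real (a^2+c^2), Complex (a*b) (c*x)],
       vector [Complex (-a*c) (-b*x), Complex (a*b) (-c*x), complex_of_real (b^2+c^2)]]
       :: complex^3^3)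
     in (\<chi> i j. M $ i $ j / complex_of_real x))"

end

theory Submission imports Defs begin
lemma real_fwd:
 fixes d1 d2 d3 p q r a b c x :: real
 assumes e11: "d1*d1 + p*p + q*q = a^2+b^2"
 and e12: "d1*p + p*d2 + q*r = b*c"
 and e13: "d1*q + p*r + q*d3 = -a*c"
 and e22: "p*p + d2*d2 + r*r = a^2+c^2"
 and e23: "p*q + d2*r + r*d3 = a*b"
 and e33: "q*q + r*r + d3*d3 = b^2+c^2"
 and psd: "\<And>y1 y2 y3. 0 \<le> d1* y1^2+d2* y2^2+d3* y3^2+2*p* y1* y2+2*q* y1* y3+2*r* y2* y3"
 and xx: "x^2 = a^2+b^2+c^2" and xp: "x>0"
 shows "x*d1 = a^2+b^2 \<and> x*d2 = a^2+c^2 \<and> x*d3 = b^2+c^2 \<and> x*p = b*c \<and> x*q = -a*c \<and> x*r = a*b"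
proof -
  define f1 where "f1 = d1*c - p*b + q*a"
  define f2 where "f2 = p*c - d2*b + r*a"
  define f3 where "f3 = q*c - r*b + d3*a"
  have "f1^2+f2^2+f3^2 = 0" unfolding f1_def f2_def f3_def using e11 e12 e13 e22 e23 e33 by algebra
  then have f: "f1 = 0" "f2 = 0" "f3 = 0" by (smt (verit) power2_less_eq_zero_iff zero_le_power2)+
  have key: "t1 = 0 \<and> t2 = 0 \<and> t3 = 0"
    if u1: "x*(d1*t1+p*t2+q*t3) + ((a^2+b^2)*t1 + b*c*t2 - a*c*t3) = 0"
    and u2: "x*(p*t1+d2*t2+r*t3) + (b*c*t1 + (a^2+c^2)*t2 + a*b*t3) = 0"
    and u3: "x*(q*t1+r*t2+d3*t3) + (-a*c*t1 + a*b*t2 + (b^2+c^2)*t3) = 0"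
    and wt: "c*t1 - b*t2 + a*t3 = 0" for t1 t2 t3
  proof -
    have A: "0 \<le> d1*t1^2+d2*t2^2+d3*t3^2+2*p*t1*t2+2*q*t1*t3+2*r*t2*t3" by (rule psd)
    have "x*(d1*t1^2+d2*t2^2+d3*t3^2+2*p*t1*t2+2*q*t1*t3+2*r*t2*t3) + x^2*(t1^2+t2^2+t3^2) = 0"
      using u1 u2 u3 wt xx by algebra
    then have "x^2*(t1^2+t2^2+t3^2) \<le> 0" using A xp by (smt (verit) mult_nonneg_nonneg)
    then have "t1^2+t2^2+t3^2 \<le> 0" using xp by (simp add: mult_le_0_iff)
    then show ?thesis by (smt (verit) power2_less_eq_zero_iff zero_le_power2)
  qed
  have c1: "x*d1 - (a^2+b^2) = 0 \<and> x*p - b*c = 0 \<and> x*q + a*c = 0"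
    apply (rule key)
    using e11 e12 e13 e22 e23 e33 f xx unfolding f1_def f2_def f3_def by algebra+
  have c2: "x*p - b*c = 0 \<and> x*d2 - (a^2+c^2) = 0 \<and> x*r - a*b = 0"
    apply (rule key)
    using e11 e12 e13 e22 e23 e33 f xx unfolding f1_def f2_def f3_def by algebra+
  have c3: "x*q + a*c = 0 \<and> x*r - a*b = 0 \<and> x*d3 - (b^2+c^2) = 0"
    apply (rule key)
    using e11 e12 e13 e22 e23 e33 f xx unfolding f1_def f2_def f3_def by algebra+
  show ?thesis using c1 c2 c3 by auto
qed
definition mk :: "real \<Rightarrow> real \<Rightarrow> real \<Rightarrow> real \<Rightarrow> real \<Rightarrow> real \<Rightarrow> real \<Rightarrow> real \<Rightarrow> real \<Rightarrow> complex^3^3" where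
 "mk d1 d2 d3 p q r a b c = vector [vector [complex_of_real d1, Complex p a, Complex q b],
    vector [Complex p (-a), complex_of_real d2, Complex r c],
    vector [Complex q (-b), Complex r (-c), complex_of_real d3]]"

lemma mk_entries:
 "mk d1 d2 d3 p q r a b c $ 1 $ 1 = complex_of_real d1"
 "mk d1 d2 d3 p q r a b c $ 1 $ 2 = Complex p a"
 "mk d1 d2 d3 p q r a b c $ 1 $ 3 = Complex q b"
 "mk d1 d2 d3 p q r a b c $ 2 $ 1 = Complex p (-a)"
 "mk d1 d2 d3 p q r a b c $ 2 $ 2 = complex_of_real d2"
 "mk d1 d2 d3 p q r a b c $ 2 $ 3 = Complex r c"
 "mk d1 d2 d3 p q r a b c $ 3 $ 1 = Complex q (-b)"
 "mk d1 d2 d3 p q r a b c $ 3 $ 2 = Complex r (-c)"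
 "mk d1 d2 d3 p q r a b c $ 3 $ 3 = complex_of_real d3"
  by (simp_all add: mk_def)

lemma mk_HHt_fwd:
  assumes "mk d1 d2 d3 p q r a b c ** transpose (mk d1 d2 d3 p q r a b c) = 0"
  shows "d1*d1 + p*p + q*q = a^2+b^2"
 "d1*p + p*d2 + q*r = b*c"
 "d1*q + p*r + q*d3 = -a*c"
 "p*p + d2*d2 + r*r = a^2+c^2"
 "p*q + d2*r + r*d3 = a*b"
 "q*q + r*r + d3*d3 = b^2+c^2"
proof -
  have z: "\<And>i j. Re ((mk d1 d2 d3 p q r a b c ** transpose (mk d1 d2 d3 p q r a b c)) $ i $ j) = 0"
    using assms by simp
  note zz = z[unfolded matrix_matrix_mult_def transpose_def sum_3, simplified]
  show "d1*d1 + p*p + q*q = a^2+b^2" using zz[of 1 1] by (simp add: mk_entries power2_eq_square)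
  show "d1*p + p*d2 + q*r = b*c" using zz[of 1 2] by (simp add: mk_entries power2_eq_square)
  show "d1*q + p*r + q*d3 = -a*c" using zz[of 1 3] by (simp add: mk_entries power2_eq_square)
  show "p*p + d2*d2 + r*r = a^2+c^2" using zz[of 2 2] by (simp add: mk_entries power2_eq_square)
  show "p*q + d2*r + r*d3 = a*b" using zz[of 2 3] by (simp add: mk_entries power2_eq_square)
  show "q*q + r*r + d3*d3 = b^2+c^2" using zz[of 3 3] by (simp add: mk_entries power2_eq_square)
qed

lemma mk_psd_fwd:
  assumes "psd (mk d1 d2 d3 p q r a b c)"
  shows "0 \<le> d1* y1^2+d2* y2^2+d3* y3^2+2*p* y1* y2+2*q* y1* y3+2*r* y2* y3"
proof -
  let ?v = "vector [complex_of_real y1, complex_of_real y2, complex_of_real y3] :: complex^3"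
  have "0 \<le> Re (\<Sum>i\<in>UNIV. cnj (?v $ i) * (mk d1 d2 d3 p q r a b c *v ?v) $ i)"
    using assms unfolding psd_def Let_def by blast
  also have "Re (\<Sum>i\<in>UNIV. cnj (?v $ i) * (mk d1 d2 d3 p q r a b c *v ?v) $ i) = d1* y1^2+d2* y2^2+d3* y3^2+2*p* y1* y2+2*q* y1* y3+2*r* y2* y3"
    unfolding matrix_vector_mult_def sum_3 by (simp add: mk_entries power2_eq_square algebra_simps)
  finally show ?thesis .
qed
lemma psd_crit:
  fixes A :: "complex^'n^'n"
  assumes h: "hermitian A" and sq: "\<And>i j. (A ** A)$i$j = complex_of_real k * A$i$j" and k: "k > 0"
  shows "psd A"
  unfolding psd_def Let_def
proof
  fix v :: "complex^'n"
  define w where "w = A *v v"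
  have hh: "\<And>i j. cnj (A$j$i) = A$i$j" using h unfolding hermitian_def conj_transpose_def
    by (metis vec_lambda_beta)
  have AA: "A ** A = (\<chi> i j. complex_of_real k * A$i$j)" using sq by (simp add: vec_eq_iff)
  have "complex_of_real k * (\<Sum>i\<in>UNIV. cnj (v $ i) * (A *v v) $ i) = (\<Sum>i\<in>UNIV. cnj (v $ i) * ((A ** A) *v v) $ i)"
    by (simp add: AA matrix_vector_mult_def sum_distrib_left algebra_simps)
  also have "\<dots> = (\<Sum>i\<in>UNIV. cnj (v $ i) * (\<Sum>j\<in>UNIV. A$i$j * w$j))"
  proof -
    have m: "(A ** A) *v v = A *v w" by (simp add: w_def matrix_vector_mul_assoc)
    show ?thesis unfolding m by (simp add: matrix_vector_mult_def)
  qed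
  also have "\<dots> = (\<Sum>j\<in>UNIV. w$j * (\<Sum>i\<in>UNIV. cnj (A$j$i * v$i)))"
  proof -
    have "(\<Sum>i\<in>UNIV. cnj (v $ i) * (\<Sum>j\<in>UNIV. A$i$j * w$j)) = (\<Sum>i\<in>UNIV. \<Sum>j\<in>UNIV. cnj (v $ i) * A$i$j * w$j)"
      by (simp add: sum_distrib_left mult.assoc)
    also have "\<dots> = (\<Sum>j\<in>UNIV. \<Sum>i\<in>UNIV. cnj (v $ i) * A$i$j * w$j)" by (rule sum.swap)
    also have "\<dots> = (\<Sum>j\<in>UNIV. w$j * (\<Sum>i\<in>UNIV. cnj (A$j$i * v$i)))"
      by (simp add: sum_distrib_left hh mult.commute mult.left_commute)
    finally show ?thesis .
  qed
  also have "\<dots> = (\<Sum>j\<in>UNIV. complex_of_real ((cmod (w$j))^2))"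
  proof -
    have c: "\<And>j. (\<Sum>i\<in>UNIV. cnj (A$j$i * v$i)) = cnj (w$j)" by (simp add: w_def matrix_vector_mult_def cnj_sum)
    show ?thesis unfolding c by (simp add: complex_norm_square[symmetric] del: of_real_power)
  qed
  also have "\<dots> = complex_of_real (\<Sum>j\<in>UNIV. (cmod (w$j))^2)" by simp
  finally have e: "complex_of_real k * (\<Sum>i\<in>UNIV. cnj (v $ i) * (A *v v) $ i) = complex_of_real (\<Sum>j\<in>UNIV. (cmod (w$j))^2)" .
  have e2: "(\<Sum>i\<in>UNIV. cnj (v $ i) * (A *v v) $ i) = complex_of_real ((\<Sum>j\<in>UNIV. (cmod (w$j))^2) / k)"
    using k e by (simp add: field_simps)
  show "Im (\<Sum>i\<in>UNIV. cnj (v $ i) * (A *v v) $ i) = 0 \<and> 0 \<le> Re (\<Sum>i\<in>UNIV. cnj (v $ i) * (A *v v) $ i)"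
    unfolding e2 using k by (simp add: sum_nonneg)
qed
lemma Hmat_mk:
  assumes "x = sqrt (a^2+b^2+c^2)" "x > 0"
  shows "Hmat a b c = mk ((a^2+b^2)/x) ((a^2+c^2)/x) ((b^2+c^2)/x) (b*c/x) (-a*c/x) (a*b/x) a b c"
  unfolding Hmat_def Let_def assms(1)[symmetric] vec_eq_iff forall_3
  using assms(2) by (simp add: mk_entries complex_eq_iff)

lemma bwd_HHt:
  assumes xx: "x^2 = a^2+b^2+c^2" and xp: "x > 0"
  defines "H \<equiv> mk ((a^2+b^2)/x) ((a^2+c^2)/x) ((b^2+c^2)/x) (b*c/x) (-a*c/x) (a*b/x) a b c"
  shows "H ** transpose H = 0"
  unfolding H_def vec_eq_iff forall_3 matrix_matrix_mult_def transpose_def sum_3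
  using xp apply (simp add: mk_entries complex_eq_iff field_simps)
  using xx by algebra

lemma bwd_sq:
  assumes xx: "x^2 = a^2+b^2+c^2" and xp: "x > 0"
  defines "H \<equiv> mk ((a^2+b^2)/x) ((a^2+c^2)/x) ((b^2+c^2)/x) (b*c/x) (-a*c/x) (a*b/x) a b c"
  shows "(H ** H)$i$j = complex_of_real (2*x) * H$i$j"
proof -
  have "\<forall>i j. (H ** H)$i$j = complex_of_real (2*x) * H$i$j"
  unfolding H_def forall_3 matrix_matrix_mult_def sum_3
  using xp apply (simp add: mk_entries complex_eq_iff field_simps)
  using xx by algebra
  then show ?thesis by blast
qed
lemma herm_mk: assumes "hermitian H"
  shows "H = mk (Re(H$1$1)) (Re(H$2$2)) (Re(H$3$3)) (Re(H$1$2)) (Re(H$1$3)) (Re(H$2$3)) (Im(H$1$2)) (Im(H$1$3)) (Im(H$2$3))"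
proof -
  have h: "\<And>i j. cnj (H$j$i) = H$i$j" using assms unfolding hermitian_def conj_transpose_def
    by (metis vec_lambda_beta)
  show ?thesis unfolding mk_def vec_eq_iff forall_3
    using h[of 1 1] h[of 2 2] h[of 3 3] h[of 1 2] h[of 1 3] h[of 2 3]
    by (simp add: complex_eq_iff)
qed

lemma mk_herm: "hermitian (mk d1 d2 d3 p q r a b c)"
  unfolding hermitian_def conj_transpose_def mk_def vec_eq_iff forall_3
  by (simp add: complex_eq_iff)

lemma sq0: "(u::real) * u + s * s + w * w = 0 \<Longrightarrow> u = 0 \<and> s = 0 \<and> w = 0"
  by (smt (verit) zero_le_square mult_eq_0_iff)

theorem mainTheorem10:
  fixes H0 :: "complex^3^3"
  shows "(hermitian H0 \<and> psd H0 \<and> H0 ** transpose H0 = 0) \<longleftrightarrow>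
    (H0 = 0 \<or> (\<exists>a b c :: real. (a, b, c) \<noteq> (0, 0, 0) \<and> H0 = Hmat a b c))"
proof
  assume A: "hermitian H0 \<and> psd H0 \<and> H0 ** transpose H0 = 0"
  obtain d1 d2 d3 p q r a b c where H: "H0 = mk d1 d2 d3 p q r a b c"
    using herm_mk A by blast
  have E: "d1*d1 + p*p + q*q = a^2+b^2"
   "d1*p + p*d2 + q*r = b*c"
   "d1*q + p*r + q*d3 = -a*c"
   "p*p + d2*d2 + r*r = a^2+c^2"
   "p*q + d2*r + r*d3 = a*b"
   "q*q + r*r + d3*d3 = b^2+c^2"
    using mk_HHt_fwd[of d1 d2 d3 p q r a b c] A H by auto
  have P: "\<And>y1 y2 y3. 0 \<le> d1* y1^2+d2* y2^2+d3* y3^2+2*p* y1* y2+2*q* y1* y3+2*r* y2* y3"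
    using mk_psd_fwd A H by blast
  show "H0 = 0 \<or> (\<exists>a b c :: real. (a, b, c) \<noteq> (0, 0, 0) \<and> H0 = Hmat a b c)"
  proof (cases "(a, b, c) = (0, 0, 0)")
    case True
    then have "a = 0" "b = 0" "c = 0" by auto
    then have "d1 = 0 \<and> p = 0 \<and> q = 0" "p = 0 \<and> d2 = 0 \<and> r = 0" "q = 0 \<and> r = 0 \<and> d3 = 0"
      using sq0[of d1 p q] sq0[of p d2 r] sq0[of q r d3] E(1) E(4) E(6) by simp_all
    then have "H0 = 0" unfolding H mk_def vec_eq_iff forall_3 using \<open>a = 0\<close> \<open>b = 0\<close> \<open>c = 0\<close>
      by (simp add: complex_eq_iff)
    then show ?thesis by blast
  next
    case False
    define x where "x = sqrt (a^2+b^2+c^2)"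
    have "a \<noteq> 0 \<or> b \<noteq> 0 \<or> c \<noteq> 0" using False by auto
    then have "a^2+b^2+c^2 > 0"
      by (metis add_nonneg_pos add_pos_nonneg zero_le_power2 zero_less_power2 add_nonneg_nonneg)
    then have xp: "x > 0" and xx: "x^2 = a^2+b^2+c^2" unfolding x_def by auto
    have R: "x*d1 = a^2+b^2 \<and> x*d2 = a^2+c^2 \<and> x*d3 = b^2+c^2 \<and> x*p = b*c \<and> x*q = -a*c \<and> x*r = a*b"
      by (rule real_fwd[OF E P xx xp])
    have "H0 = mk ((a^2+b^2)/x) ((a^2+c^2)/x) ((b^2+c^2)/x) (b*c/x) (-a*c/x) (a*b/x) a b c"
    proof -
      have "d1 = (a^2+b^2)/x" "d2 = (a^2+c^2)/x" "d3 = (b^2+c^2)/x" "p = b*c/x" "q = -a*c/x" "r = a*b/x"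
        using R xp by (simp_all add: field_simps)
      then show ?thesis unfolding H by simp
    qed
    also have "\<dots> = Hmat a b c" using Hmat_mk[OF x_def xp] by simp
    finally show ?thesis using False by blast
  qed
next
  assume "H0 = 0 \<or> (\<exists>a b c :: real. (a, b, c) \<noteq> (0, 0, 0) \<and> H0 = Hmat a b c)"
  then show "hermitian H0 \<and> psd H0 \<and> H0 ** transpose H0 = 0"
  proof
    assume z: "H0 = 0"
    have "hermitian (0::complex^3^3)" by (simp add: hermitian_def conj_transpose_def vec_eq_iff)
    moreover have "psd (0::complex^3^3)" by (simp add: psd_def matrix_vector_mult_def)
    moreover have "(0::complex^3^3) ** transpose 0 = 0" by (simp add: matrix_matrix_mult_def vec_eq_iff)
    ultimately show ?thesis unfolding z by blast
  next
    assume "\<exists>a b c :: real. (a, b, c) \<noteq> (0, 0, 0) \<and> H0 = Hmat a b c"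
    then obtain a b c :: real where F: "(a, b, c) \<noteq> (0, 0, 0)" and H: "H0 = Hmat a b c" by blast
    define x where "x = sqrt (a^2+b^2+c^2)"
    have "a \<noteq> 0 \<or> b \<noteq> 0 \<or> c \<noteq> 0" using F by auto
    then have "a^2+b^2+c^2 > 0"
      by (metis add_nonneg_pos add_pos_nonneg zero_le_power2 zero_less_power2 add_nonneg_nonneg)
    then have xp: "x > 0" and xx: "x^2 = a^2+b^2+c^2" unfolding x_def by auto
    have H2: "H0 = mk ((a^2+b^2)/x) ((a^2+c^2)/x) ((b^2+c^2)/x) (b*c/x) (-a*c/x) (a*b/x) a b c"
      using H Hmat_mk[OF x_def xp] by simp
    have "psd H0" unfolding H2
      by (rule psd_crit[OF mk_herm bwd_sq[OF xx xp] ]) (use xp in simp)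
    then show ?thesis unfolding H2 using mk_herm bwd_HHt[OF xx xp] by simp
  qed
qed
end
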